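(* In the single-authority allocation model described in the context, if there is no uncertainty (i.e., $\Lambda$ is a Dirac measure on a single state), then there exist an optimal priority mechanism and an optimal quota mechanism, i.e., ones that maximize $\Xi(\cdot,\Lambda)$ over all mechanisms.
   Context: An authority allocates a resource of measure $q\in(0,1)$ to a continuum of agents with types $\theta=(s,m)\in[0,1]\times\mathcal M$ ($\mathcal M$ finite). States $\omega$ are type distributions with densities $f_\omega$; beliefs $\Lambda$ over states. Allocations $\mu:\Theta\to\{0,1\}$ measurable allocating measure at most $q$; a mechanism maps states to such allocations. With $h:[0,1]\to\mathbb R_+$ continuous strictly increasing, $\bar s_h(\mu,\omega)=\int\mu h\,dF_\omega$, $x_m(\mu,\omega)=\int_0^1\mu(s,m)f_\omega(s,m)ds$; utility $\xi=g(\bar s_h+\sum_mu_m(x_m))$ with $g$ continuous strictly increasing and $u_m$ differentiable concave, $h(0)+u_m'(q)\ge0$ for all $m$; $\Xi(\phi,\Lambda)=\int\xi(\bar s_h(\phi(\omega),\omega),x(\phi(\omega),\omega))d\Lambda(\omega)$. A priority mechanism with policy $P$ (a priority $P(s,m)$ for each type) allocates in order of priorities until measure $q$ is allocated, ties broken uniformly at random. A quota mechanism with policy $(Q,D)$ ($Q_m$ measure reserved for group $m$, residual $Q_R=q-\sum_mQ_m$ open to all, $D:\mathcal M\cup\{R\}\to\{1,\dots,|\mathcal M|+1\}$ a bijection) fills the reserves of $D^{-1}(1),D^{-1}(2),\dots$ in order, by descending score within each, with unfilled reserves allocated in a final round open to all. *)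

theory Defs
  imports "HOL-Probability.Probability"
begin

text \<open>Types are pairs (s, m) with score s in [0,1] and group m in a finite type 'm.
  A state is identified with its density d :: real \<times> 'm \<Rightarrow> real (only s in [0,1] matters).
  Allocations are real-valued functions on types (values in {0,1} for genuine allocations).\<close>

definition xm :: "(real \<times> 'm \<Rightarrow> real) \<Rightarrow> (real \<times> 'm \<Rightarrow> real) \<Rightarrow> 'm \<Rightarrow> real" where
  "xm \<mu> d m = (LINT s:{0..1}|lborel. \<mu> (s, m) * d (s, m))"

definition total :: "(real \<times> 'm::finite \<Rightarrow> real) \<Rightarrow> (real \<times> 'm \<Rightarrow> real) \<Rightarrow> real" where
  "total \<mu> d = (\<Sum>m\<in>UNIV. xm \<mu> d m)"

definition sbar :: "(real \<Rightarrow> real) \<Rightarrow> (real \<times> 'm::finite \<Rightarrow> real) \<Rightarrow> (real \<times> 'm \<Rightarrow> real) \<Rightarrow> real" where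
  "sbar h \<mu> d = (\<Sum>m\<in>UNIV. LINT s:{0..1}|lborel. \<mu> (s, m) * h s * d (s, m))"

definition xi :: "(real \<Rightarrow> real) \<Rightarrow> ('m::finite \<Rightarrow> real \<Rightarrow> real) \<Rightarrow> (real \<Rightarrow> real)
    \<Rightarrow> (real \<times> 'm \<Rightarrow> real) \<Rightarrow> (real \<times> 'm \<Rightarrow> real) \<Rightarrow> real" where
  "xi g u h \<mu> d = g (sbar h \<mu> d + (\<Sum>m\<in>UNIV. u m (xm \<mu> d m)))"

definition Xi :: "(real \<Rightarrow> real) \<Rightarrow> ('m::finite \<Rightarrow> real \<Rightarrow> real) \<Rightarrow> (real \<Rightarrow> real)
    \<Rightarrow> ('w \<Rightarrow> real \<times> 'm \<Rightarrow> real) \<Rightarrow> ('w \<Rightarrow> real \<times> 'm \<Rightarrow> real) \<Rightarrow> 'w measure \<Rightarrow> real" where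
  "Xi g u h f \<phi> \<Lambda> = (LINT w|\<Lambda>. xi g u h (\<phi> w) (f w))"

definition allocation :: "real \<Rightarrow> (real \<times> 'm::finite \<Rightarrow> real) \<Rightarrow> (real \<times> 'm \<Rightarrow> real) \<Rightarrow> bool" where
  "allocation q d \<mu> \<longleftrightarrow>
     (\<forall>\<theta>. \<mu> \<theta> \<in> {0, 1}) \<and>
     (\<forall>m. set_borel_measurable borel {0..1} (\<lambda>s. \<mu> (s, m))) \<and>
     total \<mu> d \<le> q"

definition mechanism :: "real \<Rightarrow> ('w \<Rightarrow> real \<times> 'm::finite \<Rightarrow> real) \<Rightarrow> ('w \<Rightarrow> real \<times> 'm \<Rightarrow> real) \<Rightarrow> bool" where
  "mechanism q f \<phi> \<longleftrightarrow> (\<forall>w. allocation q (f w) (\<phi> w))"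

text \<open>Mass of types with priority strictly above p, and mass of types with priority exactly p.
  Higher priority value = served earlier.\<close>
definition prio_upper :: "(real \<times> 'm::finite \<Rightarrow> real) \<Rightarrow> (real \<times> 'm \<Rightarrow> real) \<Rightarrow> real \<Rightarrow> real" where
  "prio_upper P d p = total (\<lambda>\<theta>. if P \<theta> > p then 1 else 0) d"

definition prio_tie :: "(real \<times> 'm::finite \<Rightarrow> real) \<Rightarrow> (real \<times> 'm \<Rightarrow> real) \<Rightarrow> real \<Rightarrow> real" where
  "prio_tie P d p = total (\<lambda>\<theta>. if P \<theta> = p then 1 else 0) d"

text \<open>Allocation of the priority mechanism in state d: everyone is served if the total mass is
  at most q; otherwise all types with priority above the cutoff p* are served and the tied class at
  p* is served with the uniform (random tie-breaking) fraction that exhausts q.\<close>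
definition prio_alloc :: "real \<Rightarrow> (real \<times> 'm::finite \<Rightarrow> real) \<Rightarrow> (real \<times> 'm \<Rightarrow> real) \<Rightarrow> real \<times> 'm \<Rightarrow> real" where
  "prio_alloc q P d \<theta> =
     (if total (\<lambda>_. 1) d \<le> q then 1
      else (let p = Inf {p. prio_upper P d p \<le> q};
                a = (q - prio_upper P d p) / prio_tie P d p
            in if P \<theta> > p then 1 else if P \<theta> = p then a else 0))"

definition prio_mech :: "real \<Rightarrow> (real \<times> 'm::finite \<Rightarrow> real) \<Rightarrow> ('w \<Rightarrow> real \<times> 'm \<Rightarrow> real) \<Rightarrow> 'w \<Rightarrow> real \<times> 'm \<Rightarrow> real" where
  "prio_mech q P f = (\<lambda>w. prio_alloc q P (f w))"

definition mass :: "(real \<times> 'm::finite \<Rightarrow> real) \<Rightarrow> (real \<times> 'm) set \<Rightarrow> real" where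
  "mass d A = total (indicator A) d"

text \<open>One round: given the already allocated set A, allocate measure k to the not yet allocated
  agents of the eligible groups E, by descending score.\<close>
definition fill :: "(real \<times> 'm::finite \<Rightarrow> real) \<Rightarrow> (real \<times> 'm) set \<Rightarrow> 'm set \<Rightarrow> real \<Rightarrow> (real \<times> 'm) set" where
  "fill d A E k =
     (let R = {\<theta>. snd \<theta> \<in> E \<and> \<theta> \<notin> A}
      in if mass d R \<le> k then A \<union> R
         else A \<union> {\<theta>\<in>R. fst \<theta> > Inf {t. mass d {\<theta>\<in>R. fst \<theta> > t} \<le> k}})"

text \<open>Reserves are indexed by 'm option: Some m is the reserve of group m, None the open residual R.\<close>
definition reserve_amt :: "real \<Rightarrow> ('m::finite \<Rightarrow> real) \<Rightarrow> 'm option \<Rightarrow> real" where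
  "reserve_amt q Q r = (case r of None \<Rightarrow> q - (\<Sum>m\<in>UNIV. Q m) | Some m \<Rightarrow> Q m)"

definition reserve_groups :: "'m option \<Rightarrow> 'm set" where
  "reserve_groups r = (case r of None \<Rightarrow> UNIV | Some m \<Rightarrow> {m})"

definition quota_policy :: "real \<Rightarrow> ('m::finite \<Rightarrow> real) \<Rightarrow> ('m option \<Rightarrow> nat) \<Rightarrow> bool" where
  "quota_policy q Q D \<longleftrightarrow> (\<forall>m. Q m \<ge> 0) \<and> (\<Sum>m\<in>UNIV. Q m) \<le> q \<and>
      bij_betw D UNIV {1..CARD('m) + 1}"

definition quota_alloc :: "real \<Rightarrow> ('m::finite \<Rightarrow> real) \<Rightarrow> ('m option \<Rightarrow> nat) \<Rightarrow> (real \<times> 'm \<Rightarrow> real) \<Rightarrow> real \<times> 'm \<Rightarrow> real" where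
  "quota_alloc q Q D d =
     (let A = fold (\<lambda>i A. fill d A (reserve_groups (inv_into UNIV D i)) (reserve_amt q Q (inv_into UNIV D i)))
                [1..<CARD('m) + 2] {}
      in indicator (fill d A UNIV (q - mass d A)))"

definition quota_mech :: "real \<Rightarrow> ('m::finite \<Rightarrow> real) \<Rightarrow> ('m option \<Rightarrow> nat) \<Rightarrow> ('w \<Rightarrow> real \<times> 'm \<Rightarrow> real) \<Rightarrow> 'w \<Rightarrow> real \<times> 'm \<Rightarrow> real" where
  "quota_mech q Q D f = (\<lambda>w. quota_alloc q Q D (f w))"

end

theory Submission
  imports Defs
begin


definition goodf :: "(real \<Rightarrow> real) \<Rightarrow> bool" where
  "goodf a \<longleftrightarrow> (\<forall>s. 0 \<le> a s \<and> a s \<le> 1) \<and> set_borel_measurable borel {0..1} a"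

lemma int_good:
  fixes w :: "real \<Rightarrow> real"
  assumes "goodf a" "set_integrable lborel {0..1} w"
  shows "set_integrable lborel {0..1} (\<lambda>s. a s * w s)"
proof (rule set_integrable_bound[OF assms(2)])
  have m1: "(\<lambda>x. indicator {0..1} x *\<^sub>R a x) \<in> borel_measurable borel"
    using assms(1) unfolding goodf_def set_borel_measurable_def by simp
  have "(\<lambda>x. indicator {0..1} x *\<^sub>R w x) \<in> borel_measurable lborel"
    using assms(2) unfolding set_integrable_def by auto
  then have m2: "(\<lambda>x. indicator {0..1} x *\<^sub>R w x) \<in> borel_measurable borel" by simp
  have "(\<lambda>x. (indicator {0..1} x *\<^sub>R a x) * (indicator {0..1} x *\<^sub>R w x)) \<in> borel_measurable borel"
    using m1 m2 by measurable
  moreover have "(\<lambda>x. (indicator {0..1} x *\<^sub>R a x) * (indicator {0..1} x *\<^sub>R w x)) =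
     (\<lambda>x. indicator {0..1} x *\<^sub>R (a x * w x))"
    by (auto simp: indicator_def)
  ultimately show "set_borel_measurable lborel {0..1} (\<lambda>s. a s * w s)"
    unfolding set_borel_measurable_def by simp
  show "AE x in lborel. x \<in> {0..1} \<longrightarrow> norm (a x * w x) \<le> norm (w x)"
    using assms(1) unfolding goodf_def
    by (auto simp: abs_mult intro!: mult_left_le_one_le)
qed

lemma goodf_mult_cont:
  fixes h :: "real \<Rightarrow> real"
  assumes "goodf a" "continuous_on {0..1} h" "set_integrable lborel {0..1} w"
  shows "set_integrable lborel {0..1} (\<lambda>s. a s * h s * w s)"
proof -
  obtain B where B0: "\<forall>x\<in>h ` {0..1}. norm x \<le> B"
    using compact_imp_bounded[OF compact_continuous_image[OF assms(2) compact_Icc]]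
    unfolding bounded_iff by blast
  have B: "\<And>s. s \<in> {0..1} \<Longrightarrow> \<bar>h s\<bar> \<le> B" using B0 by auto
  have "set_integrable lborel {0..1} (\<lambda>s. B * w s)" using assms(3) by simp
  then show ?thesis
  proof (rule set_integrable_bound)
    have m1: "(\<lambda>x. indicator {0..1} x *\<^sub>R a x) \<in> borel_measurable borel"
      using assms(1) unfolding goodf_def set_borel_measurable_def by simp
    have m3: "(\<lambda>x. indicator {0..1} x *\<^sub>R h x) \<in> borel_measurable borel"
      using set_measurable_continuous_on[OF _ assms(2)] unfolding set_borel_measurable_def by simp
    have "(\<lambda>x. indicator {0..1} x *\<^sub>R w x) \<in> borel_measurable lborel"
      using assms(3) unfolding set_integrable_def by auto
    then have m2: "(\<lambda>x. indicator {0..1} x *\<^sub>R w x) \<in> borel_measurable borel" by simp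
    have "(\<lambda>x. (indicator {0..1} x *\<^sub>R a x) * (indicator {0..1} x *\<^sub>R h x) * (indicator {0..1} x *\<^sub>R w x)) \<in> borel_measurable borel"
      using m1 m2 m3 by measurable
    moreover have "(\<lambda>x. (indicator {0..1} x *\<^sub>R a x) * (indicator {0..1} x *\<^sub>R h x) * (indicator {0..1} x *\<^sub>R w x)) =
       (\<lambda>x. indicator {0..1} x *\<^sub>R (a x * h x * w x))"
      by (auto simp: indicator_def)
    ultimately show "set_borel_measurable lborel {0..1} (\<lambda>s. a s * h s * w s)"
      unfolding set_borel_measurable_def by simp
    show "AE x in lborel. x \<in> {0..1} \<longrightarrow> norm (a x * h x * w x) \<le> norm (B * w x)"
    proof (rule AE_I2, rule impI)
      fix x :: real assume x: "x \<in> {0..1}"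
      have "\<bar>a x * h x\<bar> \<le> B" using B[OF x] assms(1) unfolding goodf_def
        by (auto simp: abs_mult intro: order_trans[OF mult_left_le_one_le])
      then show "norm (a x * h x * w x) \<le> norm (B * w x)"
        by (auto simp: abs_mult intro!: mult_right_mono)
    qed
  qed
qed

lemma tail_cont:
  fixes w :: "real \<Rightarrow> real"
  assumes w: "set_integrable lborel {0..1} w"
  shows "continuous_on UNIV (\<lambda>t. LINT s:{0..1}|lborel. (if t < s then w s else 0))"
proof -
  have wm: "(\<lambda>x. indicator {0..1} x *\<^sub>R w x) \<in> borel_measurable lborel"
    using w unfolding set_integrable_def by auto
  have wa: "integrable lborel (\<lambda>x. indicator {0..1} x *\<^sub>R \<bar>w x\<bar>)"
    using set_integrable_abs[OF w] unfolding set_integrable_def .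
  have meas: "(\<lambda>s. indicator {0..1} s *\<^sub>R (if t < s then w s else 0)) \<in> borel_measurable lborel" for t
  proof -
    have "(\<lambda>s. indicator {t<..} s * (indicator {0..1} s *\<^sub>R w s)) \<in> borel_measurable lborel"
      using wm by measurable
    moreover have "(\<lambda>s. indicator {t<..} s * (indicator {0..1} s *\<^sub>R w s)) =
        (\<lambda>s. indicator {0..1} s *\<^sub>R (if t < s then w s else 0))"
      by (auto simp: indicator_def)
    ultimately show ?thesis by simp
  qed
  show ?thesis
  proof (intro continuous_at_imp_continuous_on ballI continuous_at_sequentiallyI)
    fix a :: real and u :: "nat \<Rightarrow> real"
    assume u: "u \<longlonglongrightarrow> a"
    show "(\<lambda>n. LINT s:{0..1}|lborel. (if u n < s then w s else 0)) \<longlonglongrightarrow>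
          (LINT s:{0..1}|lborel. (if a < s then w s else 0))"
      unfolding set_lebesgue_integral_def
    proof (rule integral_dominated_convergence[OF meas meas wa])
      show "AE x in lborel. (\<lambda>n. indicator {0..1} x *\<^sub>R (if u n < x then w x else 0)) \<longlonglongrightarrow>
              indicator {0..1} x *\<^sub>R (if a < x then w x else 0)"
        using AE_lborel_singleton[of a]
      proof eventually_elim
        case (elim x)
        show ?case
        proof (cases "a < x")
          case True
          then have "eventually (\<lambda>n. u n < x) sequentially" using order_tendstoD(2)[OF u] by blast
          then have "eventually (\<lambda>n. indicator {0..1} x *\<^sub>R (if u n < x then w x else 0) =
                indicator {0..1} x *\<^sub>R (if a < x then w x else 0)) sequentially"
            by eventually_elim (use True in auto)
          then show ?thesis by (rule tendsto_eventually)
        next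
          case False
          then have "x < a" using elim by auto
          then have "eventually (\<lambda>n. x < u n) sequentially" using order_tendstoD(1)[OF u] by blast
          then have "eventually (\<lambda>n. indicator {0..1} x *\<^sub>R (if u n < x then w x else 0) =
                indicator {0..1} x *\<^sub>R (if a < x then w x else 0)) sequentially"
            by eventually_elim (use False in auto)
          then show ?thesis by (rule tendsto_eventually)
        qed
      qed
      show "AE x in lborel. norm (indicator {0..1} x *\<^sub>R (if u n < x then w x else 0))
              \<le> indicator {0..1} x *\<^sub>R \<bar>w x\<bar>" for n
        by (auto simp: indicator_def)
    qed
  qed
qed

lemma inf_thresh:
  fixes M :: "real \<Rightarrow> real"
  assumes cont: "continuous_on UNIV M" and neg: "\<And>t. t < 0 \<Longrightarrow> M t = c"
    and ge1: "\<And>t. 1 \<le> t \<Longrightarrow> M t = 0" and k: "0 \<le> k" "k < c"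
  shows "0 \<le> Inf {t. M t \<le> k} \<and> Inf {t. M t \<le> k} \<le> 1 \<and> M (Inf {t. M t \<le> k}) = k"
proof -
  define S where "S = {t. M t \<le> k}"
  define \<tau> where "\<tau> = Inf S"
  have 1: "1 \<in> S" using ge1 k by (auto simp: S_def)
  have lb: "\<And>t. t \<in> S \<Longrightarrow> 0 \<le> t"
  proof (rule ccontr)
    fix t assume "t \<in> S" "\<not> 0 \<le> t"
    then show False using neg[of t] k by (auto simp: S_def)
  qed
  have bdd: "bdd_below S" using lb by (auto simp: bdd_below_def)
  have ne: "S \<noteq> {}" using 1 by auto
  have t0: "0 \<le> \<tau>" unfolding \<tau>_def using ne lb by (intro cInf_greatest) auto
  have t1: "\<tau> \<le> 1" unfolding \<tau>_def using 1 bdd by (intro cInf_lower)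
  have le: "M \<tau> \<le> k"
  proof (rule ccontr)
    assume "\<not> M \<tau> \<le> k"
    then have gt: "M \<tau> > k" by simp
    have "isCont M \<tau>" using cont by (simp add: continuous_on_eq_continuous_at)
    then obtain e where e: "e > 0" "\<And>t. dist t \<tau> < e \<Longrightarrow> dist (M t) (M \<tau>) < M \<tau> - k"
      using gt unfolding continuous_at_eps_delta by (metis diff_gt_0_iff_gt)
    have "Inf S < \<tau> + e" using e by (simp add: \<tau>_def)
    then obtain t where t: "t \<in> S" "t < \<tau> + e" using cInf_less_iff[OF ne bdd] by auto
    have "\<tau> \<le> t" unfolding \<tau>_def using t bdd by (intro cInf_lower)
    then have "dist t \<tau> < e" using t by (simp add: dist_real_def)
    then have "M t > k" using e(2)[of t] by (auto simp: dist_real_def)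
    then show False using t by (auto simp: S_def)
  qed
  have ge: "M \<tau> \<ge> k"
  proof (rule ccontr)
    assume "\<not> M \<tau> \<ge> k"
    then have lt: "M \<tau> < k" by simp
    have "\<exists>x. -1 \<le> x \<and> x \<le> \<tau> \<and> M x = k"
      using lt neg[of "-1"] k t0 by (intro IVT2') (auto intro: continuous_on_subset[OF cont])
    then obtain x where x: "x \<le> \<tau>" "M x = k" by auto
    then have "x \<noteq> \<tau>" using lt by auto
    then have "x < \<tau>" using x by auto
    moreover have "\<tau> \<le> x" unfolding \<tau>_def using x bdd by (intro cInf_lower) (auto simp: S_def)
    ultimately show False by simp
  qed
  show ?thesis using t0 t1 le ge unfolding \<tau>_def S_def by auto
qed

lemma concave_incr:
  fixes U :: "real \<Rightarrow> real"
  assumes conc: "concave_on {0..1} U"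
    and diff: "\<And>x. x \<in> {0..1} \<Longrightarrow> U differentiable (at x within {0..1})"
    and q: "0 < q" "q < 1" and xy: "0 \<le> x" "x \<le> y" "y \<le> q"
  shows "U y - U x \<ge> deriv U q * (y - x)"
proof (cases "x = y")
  case True then show ?thesis by simp
next
  case False
  then have y0: "0 < y" using xy by auto
  have cv: "convex_on {0..1} (\<lambda>z. - U z)" using conc by (simp add: concave_on_def)
  have int: "\<And>z. 0 < z \<Longrightarrow> z < 1 \<Longrightarrow> z \<in> interior {0..1::real}" by simp
  have der: "\<exists>D. (U has_real_derivative D) (at z within {0..1})" if "z \<in> {0..1}" for z
    using diff[OF that] by (simp add: real_differentiable_def)
  obtain Dy where Dy: "(U has_real_derivative Dy) (at y within {0..1})"
    using der[of y] xy q by auto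
  have Dq: "(U has_real_derivative deriv U q) (at q within {0..1})"
  proof -
    have "U differentiable (at q)" using diff[of q] q at_within_interior[OF int[of q]] by auto
    then have "(U has_real_derivative deriv U q) (at q)"
      using DERIV_deriv_iff_real_differentiable by blast
    then show ?thesis by (rule has_field_derivative_at_within)
  qed
  have tang: "(- U b) - (- U a) \<ge> (- D) * (b - a)"
    if "(U has_real_derivative D) (at a within {0..1})" "a \<in> interior {0..1}" "b \<in> {0..1}" for a b D
    by (rule convex_on_imp_above_tangent[OF cv]) (use that in \<open>auto intro: derivative_eq_intros\<close>)
  have yint: "y \<in> interior {0..1}" using y0 xy q by simp
  have qint: "q \<in> interior {0..1}" using q by simp
  have 1: "U y - U x \<ge> Dy * (y - x)" using tang[OF Dy yint, of x] xy q by (auto simp: algebra_simps)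
  have 2: "Dy \<ge> deriv U q"
  proof (cases "y = q")
    case True
    then show ?thesis using DERIV_unique[OF Dy[unfolded True, unfolded at_within_interior[OF qint]]
        Dq[unfolded at_within_interior[OF qint]]] by simp
  next
    case False
    then have yq: "y < q" using xy by simp
    have a: "U q - U y \<le> Dy * (q - y)" using tang[OF Dy yint, of q] q by (auto simp: algebra_simps)
    have b: "U q - U y \<ge> deriv U q * (q - y)" using tang[OF Dq qint, of y] xy q by (auto simp: algebra_simps)
    from a b have "deriv U q * (q - y) \<le> Dy * (q - y)" by simp
    then show ?thesis using yq by simp
  qed
  have "deriv U q * (y - x) \<le> Dy * (y - x)" using 2 xy by (intro mult_right_mono) auto
  then show ?thesis using 1 by simp
qed

locale setting =
  fixes d :: "real \<times> 'm::finite \<Rightarrow> real" and h :: "real \<Rightarrow> real"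
    and u :: "'m \<Rightarrow> real \<Rightarrow> real" and q :: real
  assumes q: "0 < q" "q < 1"
    and d_nonneg: "\<And>s m. d (s, m) \<ge> 0"
    and d_int: "\<And>m. set_integrable lborel {0..1} (\<lambda>s. d (s, m))"
    and d_prob: "(\<Sum>m\<in>UNIV. LINT s:{0..1}|lborel. d (s, m)) = 1"
    and h_cont: "continuous_on {0..1} h" and h_mono: "strict_mono_on {0..1} h"
    and h_nonneg: "\<And>s. s \<in> {0..1} \<Longrightarrow> h s \<ge> 0"
    and u_conc: "\<And>m. concave_on {0..1} (u m)"
    and u_diff: "\<And>m x. x \<in> {0..1} \<Longrightarrow> u m differentiable (at x within {0..1})"
    and u_cond: "\<And>m. h 0 + deriv (u m) q \<ge> 0"
begin

definition V :: "(real \<times> 'm \<Rightarrow> real) \<Rightarrow> real" where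
  "V \<mu> = sbar h \<mu> d + (\<Sum>m\<in>UNIV. u m (xm \<mu> d m))"

definition good :: "(real \<times> 'm \<Rightarrow> real) \<Rightarrow> bool" where
  "good \<mu> \<longleftrightarrow> (\<forall>m. goodf (\<lambda>s. \<mu> (s, m)))"

definition mass_m :: "'m \<Rightarrow> real" where
  "mass_m m = (LINT s:{0..1}|lborel. d (s, m))"

lemma h_le: "a \<in> {0..1} \<Longrightarrow> b \<in> {0..1} \<Longrightarrow> a \<le> b \<Longrightarrow> h a \<le> h b"
  using h_mono by (rule strict_mono_on_leD)

lemma int1: "good \<mu> \<Longrightarrow> set_integrable lborel {0..1} (\<lambda>s. \<mu> (s, m) * d (s, m))"
  unfolding good_def using int_good d_int by blast

lemma int2: "good \<mu> \<Longrightarrow> set_integrable lborel {0..1} (\<lambda>s. \<mu> (s, m) * h s * d (s, m))"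
  unfolding good_def using goodf_mult_cont h_cont d_int by blast

lemma xm_nonneg: "good \<mu> \<Longrightarrow> xm \<mu> d m \<ge> 0"
  unfolding xm_def set_lebesgue_integral_def using d_nonneg
  by (intro Bochner_Integration.integral_nonneg) (auto simp: good_def goodf_def indicator_def)

lemma xm_le_mass: "good \<mu> \<Longrightarrow> xm \<mu> d m \<le> mass_m m"
  unfolding xm_def mass_m_def using d_nonneg
  by (intro set_integral_mono int1 d_int) (auto simp: good_def goodf_def intro!: mult_left_le_one_le)

lemma xm_le_total: "good \<mu> \<Longrightarrow> xm \<mu> d m \<le> total \<mu> d"
  unfolding total_def by (rule member_le_sum) (auto intro: xm_nonneg)

lemma V_mono:
  assumes "good \<mu>" "good \<nu>" and le: "\<And>s m. s \<in> {0..1} \<Longrightarrow> \<mu> (s, m) \<le> \<nu> (s, m)"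
    and tot: "total \<nu> d \<le> q"
  shows "V \<mu> \<le> V \<nu>"
proof -
  have key: "(LINT s:{0..1}|lborel. \<mu> (s, m) * h s * d (s, m)) + u m (xm \<mu> d m) \<le>
             (LINT s:{0..1}|lborel. \<nu> (s, m) * h s * d (s, m)) + u m (xm \<nu> d m)" for m
  proof -
    define x where "x = xm \<mu> d m"
    define y where "y = xm \<nu> d m"
    have xy: "x \<le> y" unfolding x_def y_def xm_def
      using le d_nonneg by (intro set_integral_mono int1 assms) (auto intro: mult_right_mono)
    have x0: "0 \<le> x" unfolding x_def by (rule xm_nonneg[OF assms(1)])
    have yq: "y \<le> q" unfolding y_def using xm_le_total[OF assms(2), of m] tot by linarith
    have A: "(LINT s:{0..1}|lborel. \<nu> (s, m) * h s * d (s, m)) - (LINT s:{0..1}|lborel. \<mu> (s, m) * h s * d (s, m))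
         \<ge> h 0 * (y - x)"
    proof -
      have "h 0 * (y - x) = (LINT s:{0..1}|lborel. h 0 * (\<nu> (s, m) * d (s, m) - \<mu> (s, m) * d (s, m)))"
        unfolding x_def y_def xm_def using int1[OF assms(1)] int1[OF assms(2)] by simp
      also have "\<dots> \<le> (LINT s:{0..1}|lborel. \<nu> (s, m) * h s * d (s, m) - \<mu> (s, m) * h s * d (s, m))"
      proof (intro set_integral_mono)
        show "set_integrable lborel {0..1} (\<lambda>s. h 0 * (\<nu> (s, m) * d (s, m) - \<mu> (s, m) * d (s, m)))"
          using int1[OF assms(1)] int1[OF assms(2)] by auto
        show "set_integrable lborel {0..1} (\<lambda>s. \<nu> (s, m) * h s * d (s, m) - \<mu> (s, m) * h s * d (s, m))"
          using int2[OF assms(1)] int2[OF assms(2)] by auto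
        fix s :: real assume s: "s \<in> {0..1}"
        have "0 \<le> (\<nu> (s, m) - \<mu> (s, m)) * d (s, m) * (h s - h 0)"
          using le[OF s] d_nonneg[of s m] h_le[of 0 s] s by (intro mult_nonneg_nonneg) auto
        then show "h 0 * (\<nu> (s, m) * d (s, m) - \<mu> (s, m) * d (s, m)) \<le> \<nu> (s, m) * h s * d (s, m) - \<mu> (s, m) * h s * d (s, m)"
          by (simp add: algebra_simps)
      qed
      also have "\<dots> = (LINT s:{0..1}|lborel. \<nu> (s, m) * h s * d (s, m)) - (LINT s:{0..1}|lborel. \<mu> (s, m) * h s * d (s, m))"
        using int2[OF assms(1)] int2[OF assms(2)] by simp
      finally show ?thesis .
    qed
    have B: "u m y - u m x \<ge> deriv (u m) q * (y - x)"
      using concave_incr[OF u_conc u_diff q x0 xy yq] by blast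
    have "0 \<le> (h 0 + deriv (u m) q) * (y - x)" using u_cond[of m] xy by simp
    then show ?thesis using A B unfolding x_def[symmetric] y_def[symmetric] by (simp add: algebra_simps)
  qed
  have "V \<mu> = (\<Sum>m\<in>UNIV. (LINT s:{0..1}|lborel. \<mu> (s, m) * h s * d (s, m)) + u m (xm \<mu> d m))"
    unfolding V_def sbar_def by (simp add: sum.distrib)
  also have "\<dots> \<le> (\<Sum>m\<in>UNIV. (LINT s:{0..1}|lborel. \<nu> (s, m) * h s * d (s, m)) + u m (xm \<nu> d m))"
    by (intro sum_mono key)
  also have "\<dots> = V \<nu>"
    unfolding V_def sbar_def by (simp add: sum.distrib)
  finally show ?thesis .
qed

lemma rearr:
  assumes "good \<mu>" "good \<nu>" "\<tau> \<in> {0..1}"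
    and sign: "\<And>s. s \<in> {0..1} \<Longrightarrow> (\<nu> (s, m) - \<mu> (s, m)) * (h s - h \<tau>) \<ge> 0"
    and eq: "xm \<mu> d m = xm \<nu> d m"
  shows "(LINT s:{0..1}|lborel. \<mu> (s, m) * h s * d (s, m)) \<le> (LINT s:{0..1}|lborel. \<nu> (s, m) * h s * d (s, m))"
proof -
  have "0 = h \<tau> * (xm \<nu> d m - xm \<mu> d m)" using eq by simp
  also have "\<dots> = (LINT s:{0..1}|lborel. h \<tau> * (\<nu> (s, m) * d (s, m) - \<mu> (s, m) * d (s, m)))"
    unfolding xm_def using int1[OF assms(1)] int1[OF assms(2)] by simp
  also have "\<dots> \<le> (LINT s:{0..1}|lborel. \<nu> (s, m) * h s * d (s, m) - \<mu> (s, m) * h s * d (s, m))"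
  proof (intro set_integral_mono)
    show "set_integrable lborel {0..1} (\<lambda>s. h \<tau> * (\<nu> (s, m) * d (s, m) - \<mu> (s, m) * d (s, m)))"
      using int1[OF assms(1)] int1[OF assms(2)] by auto
    show "set_integrable lborel {0..1} (\<lambda>s. \<nu> (s, m) * h s * d (s, m) - \<mu> (s, m) * h s * d (s, m))"
      using int2[OF assms(1)] int2[OF assms(2)] by auto
    fix s :: real assume s: "s \<in> {0..1}"
    have "0 \<le> ((\<nu> (s, m) - \<mu> (s, m)) * (h s - h \<tau>)) * d (s, m)"
      using mult_nonneg_nonneg[OF sign[OF s] d_nonneg[of s m]] .
    then show "h \<tau> * (\<nu> (s, m) * d (s, m) - \<mu> (s, m) * d (s, m)) \<le> \<nu> (s, m) * h s * d (s, m) - \<mu> (s, m) * h s * d (s, m)"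
      by (simp add: algebra_simps)
  qed
  also have "\<dots> = (LINT s:{0..1}|lborel. \<nu> (s, m) * h s * d (s, m)) - (LINT s:{0..1}|lborel. \<mu> (s, m) * h s * d (s, m))"
    using int2[OF assms(1)] int2[OF assms(2)] by simp
  finally show ?thesis by simp
qed

definition thr :: "real^'m \<Rightarrow> real \<times> 'm \<Rightarrow> real" where
  "thr t = (\<lambda>\<theta>. if t $ snd \<theta> < fst \<theta> then 1 else 0)"

definition Fm :: "'m \<Rightarrow> real \<Rightarrow> real" where
  "Fm m \<tau> = (LINT s:{0..1}|lborel. (if \<tau> < s then d (s, m) else 0))"

definition Gm :: "'m \<Rightarrow> real \<Rightarrow> real" where
  "Gm m \<tau> = (LINT s:{0..1}|lborel. (if \<tau> < s then h s * d (s, m) else 0))"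

lemma goodf_thr1: "goodf (\<lambda>s. if \<tau> < s then 1 else 0)"
proof -
  have "(\<lambda>s. indicator {0..1} s *\<^sub>R (if \<tau> < s then 1 else 0)) = (\<lambda>s. indicator ({0..1} \<inter> {\<tau><..}) s :: real)"
    by (auto simp: indicator_def)
  then show ?thesis unfolding goodf_def set_borel_measurable_def by simp
qed

lemma good_thr: "good (thr t)"
  unfolding good_def thr_def by (simp add: goodf_thr1)

lemma xm_thr: "xm (thr t) d m = Fm m (t $ m)"
  unfolding xm_def Fm_def thr_def by (intro set_lebesgue_integral_cong) auto

lemma sbar_thr: "sbar h (thr t) d = (\<Sum>m\<in>UNIV. Gm m (t $ m))"
  unfolding sbar_def Gm_def thr_def by (intro sum.cong refl set_lebesgue_integral_cong) auto

lemma hd_int: "set_integrable lborel {0..1} (\<lambda>s. h s * d (s, m))"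
  using goodf_mult_cont[of "\<lambda>_. 1", OF _ h_cont d_int] by (simp add: goodf_def set_borel_measurable_def)

lemma Fm_cont: "continuous_on UNIV (Fm m)"
  unfolding Fm_def[abs_def] by (rule tail_cont[OF d_int])

lemma Gm_cont: "continuous_on UNIV (Gm m)"
  unfolding Gm_def[abs_def] by (rule tail_cont[OF hd_int])

lemma Fm_neg: "\<tau> < 0 \<Longrightarrow> Fm m \<tau> = mass_m m"
  unfolding Fm_def mass_m_def by (intro set_lebesgue_integral_cong) auto

lemma Fm_ge1: "1 \<le> \<tau> \<Longrightarrow> Fm m \<tau> = 0"
  unfolding Fm_def by (subst set_lebesgue_integral_cong[of _ _ _ "\<lambda>_. 0"]) auto

lemma Fm_bounds: "0 \<le> Fm m \<tau> \<and> Fm m \<tau> \<le> mass_m m"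
  using xm_nonneg[OF good_thr, of "vec \<tau>" m] xm_le_mass[OF good_thr, of "vec \<tau>" m] xm_thr[of "vec \<tau>" m] by simp

lemma mass_nonneg: "0 \<le> mass_m m"
  using Fm_bounds by (meson order_trans)

lemma mass_le1: "mass_m m \<le> 1"
proof -
  have "mass_m m \<le> (\<Sum>m\<in>UNIV. mass_m m)" by (rule member_le_sum) (auto intro: mass_nonneg)
  then show ?thesis using d_prob unfolding mass_m_def by simp
qed

lemma u_cont: "continuous_on {0..1} (u m)"
  using u_diff differentiable_imp_continuous_within continuous_on_eq_continuous_within by blast

lemma thr_sign:
  assumes "good \<mu>" "\<tau> \<le> 1" "s \<in> {0..1}"
  shows "((if \<tau> < s then 1 else 0) - \<mu> (s, m)) * (h s - h (max 0 \<tau>)) \<ge> 0"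
proof -
  have b: "0 \<le> \<mu> (s, m)" "\<mu> (s, m) \<le> 1" using assms(1) unfolding good_def goodf_def by auto
  show ?thesis
  proof (cases "\<tau> < s")
    case True
    then have "h (max 0 \<tau>) \<le> h s" using assms by (intro h_le) auto
    then show ?thesis using True b by auto
  next
    case False
    then have "h s \<le> h (max 0 \<tau>)" using assms by (intro h_le) auto
    then show ?thesis using False b by (auto intro: mult_nonneg_nonpos)
  qed
qed

definition Kset :: "(real^'m) set" where
  "Kset = {t. (\<forall>m. -1 \<le> t $ m \<and> t $ m \<le> 1) \<and> (\<Sum>m\<in>UNIV. Fm m (t $ m)) \<le> q}"

definition Sf :: "real^'m \<Rightarrow> real" where
  "Sf t = (\<Sum>m\<in>UNIV. Gm m (t $ m) + u m (Fm m (t $ m)))"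

lemma V_thr: "V (thr t) = Sf t"
  unfolding V_def Sf_def sbar_thr xm_thr by (simp add: sum.distrib)

lemma exists_opt: "\<exists>t\<in>Kset. \<forall>t'\<in>Kset. Sf t' \<le> Sf t"
proof (rule continuous_attains_sup)
  have "Kset = cbox (vec (-1)) (vec 1) \<inter> {t. (\<Sum>m\<in>UNIV. Fm m (t $ m)) \<le> q}"
    unfolding Kset_def by (auto simp: mem_box_cart)
  moreover have "closed {t::real^'m. (\<Sum>m\<in>UNIV. Fm m (t $ m)) \<le> q}"
  proof (rule closed_Collect_le)
    show "continuous_on UNIV (\<lambda>t::real^'m. \<Sum>m\<in>UNIV. Fm m (t $ m))"
      by (intro continuous_on_sum continuous_on_compose2[OF Fm_cont] continuous_on_component continuous_on_id) auto
  qed auto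
  ultimately show "compact Kset" by (simp add: compact_Int_closed)
  have "Fm m (vec 1 $ m) = 0" for m by (simp add: Fm_ge1)
  then have "vec 1 \<in> Kset" unfolding Kset_def using q by simp
  then show "Kset \<noteq> {}" by auto
  show "continuous_on Kset Sf"
    unfolding Sf_def[abs_def]
  proof (intro continuous_on_sum continuous_on_add)
    fix m
    show "continuous_on Kset (\<lambda>t. Gm m (t $ m))"
      by (intro continuous_on_compose2[OF Gm_cont] continuous_on_component continuous_on_id) auto
    have "continuous_on Kset (\<lambda>t. Fm m (t $ m))"
      by (intro continuous_on_compose2[OF Fm_cont] continuous_on_component continuous_on_id) auto
    moreover have "Fm m \<tau> \<in> {0..1}" for \<tau>
      using Fm_bounds[of m \<tau>] mass_le1[of m] by (meson atLeastAtMost_iff order_trans)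
    then have "(\<lambda>t. Fm m (t $ m)) ` Kset \<subseteq> {0..1}" by auto
    ultimately show "continuous_on Kset (\<lambda>t. u m (Fm m (t $ m)))"
      by (rule continuous_on_compose2[OF u_cont])
  qed
qed

lemma dominated:
  assumes "good \<mu>" "total \<mu> d \<le> q"
  shows "\<exists>t\<in>Kset. V \<mu> \<le> Sf t"
proof -
  have "\<exists>\<tau>. -1 \<le> \<tau> \<and> \<tau> \<le> 1 \<and> Fm m \<tau> = xm \<mu> d m" for m
  proof (rule IVT2')
    show "Fm m 1 \<le> xm \<mu> d m" using Fm_ge1 xm_nonneg[OF assms(1)] by simp
    show "xm \<mu> d m \<le> Fm m (-1)" using Fm_neg xm_le_mass[OF assms(1)] by simp
  qed (auto intro: continuous_on_subset[OF Fm_cont])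
  then obtain T where T: "\<And>m. -1 \<le> T m \<and> T m \<le> 1 \<and> Fm m (T m) = xm \<mu> d m" by metis
  define t :: "real^'m" where "t = (\<chi> m. T m)"
  have tK: "t \<in> Kset"
    unfolding Kset_def t_def using T assms(2) by (simp add: total_def)
  have "V \<mu> \<le> V (thr t)"
  proof -
    have "(LINT s:{0..1}|lborel. \<mu> (s, m) * h s * d (s, m)) \<le> (LINT s:{0..1}|lborel. thr t (s, m) * h s * d (s, m))" for m
    proof (rule rearr[OF assms(1) good_thr, of "max 0 (t $ m)"])
      show "max 0 (t $ m) \<in> {0..1}" using T[of m] by (auto simp: t_def)
      show "0 \<le> (thr t (s, m) - \<mu> (s, m)) * (h s - h (max 0 (t $ m)))" if "s \<in> {0..1}" for s
        using thr_sign[OF assms(1) _ that, of "t $ m" m] T[of m] unfolding thr_def by (auto simp: t_def)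
      show "xm \<mu> d m = xm (thr t) d m" using T[of m] by (simp add: xm_thr t_def)
    qed
    moreover have "xm \<mu> d m = xm (thr t) d m" for m using T[of m] by (simp add: xm_thr t_def)
    ultimately show ?thesis unfolding V_def sbar_def by (auto intro!: add_mono sum_mono)
  qed
  then show ?thesis using tK V_thr by auto
qed

lemma total_lin: "good \<mu> \<Longrightarrow> good \<nu> \<Longrightarrow> total (\<lambda>\<theta>. a * \<mu> \<theta> + b * \<nu> \<theta>) d = a * total \<mu> d + b * total \<nu> d"
proof -
  assume g: "good \<mu>" "good \<nu>"
  have "xm (\<lambda>\<theta>. a * \<mu> \<theta> + b * \<nu> \<theta>) d m = a * xm \<mu> d m + b * xm \<nu> d m" for m
  proof -
    have "xm (\<lambda>\<theta>. a * \<mu> \<theta> + b * \<nu> \<theta>) d m = (LINT s:{0..1}|lborel. a * (\<mu> (s, m) * d (s, m)) + b * (\<nu> (s, m) * d (s, m)))"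
      unfolding xm_def by (simp add: algebra_simps)
    also have "\<dots> = a * xm \<mu> d m + b * xm \<nu> d m"
      unfolding xm_def using int1[OF g(1), of m] int1[OF g(2), of m] by simp
    finally show ?thesis .
  qed
  then show ?thesis unfolding total_def by (simp add: sum.distrib sum_distrib_left)
qed

lemma good_one: "good (\<lambda>_. 1)"
  unfolding good_def goodf_def set_borel_measurable_def by simp

lemma good_zero: "good (\<lambda>_. 0)"
  unfolding good_def goodf_def set_borel_measurable_def by simp

lemma total_one: "total (\<lambda>_. 1) d = 1"
  unfolding total_def xm_def using d_prob by simp

lemma total_zero: "total (\<lambda>_. 0) d = 0"
  unfolding total_def xm_def by simp

lemma total_thr: "total (thr t) d = (\<Sum>m\<in>UNIV. Fm m (t $ m))"
  unfolding total_def xm_thr ..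

lemma good_affine:
  assumes "good p" "0 \<le> a" "a \<le> 1"
  shows "good (\<lambda>\<theta>. p \<theta> + a * (1 - p \<theta>))"
  unfolding good_def goodf_def
proof (intro allI conjI)
  fix m s
  have b: "0 \<le> p (s, m)" "p (s, m) \<le> 1" using assms(1) unfolding good_def goodf_def by auto
  show "0 \<le> p (s, m) + a * (1 - p (s, m))" using b assms by simp
  have "a * (1 - p (s, m)) \<le> 1 * (1 - p (s, m))" using b assms by (intro mult_right_mono) auto
  then show "p (s, m) + a * (1 - p (s, m)) \<le> 1" by simp
next
  fix m
  have "(\<lambda>x. indicator {0..1} x *\<^sub>R p (x, m)) \<in> borel_measurable borel"
    using assms(1) unfolding good_def goodf_def set_borel_measurable_def by auto
  then have "(\<lambda>x. (1 - a) * (indicator {0..1} x *\<^sub>R p (x, m)) + a * indicator {0..1} x) \<in> borel_measurable borel"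
    by measurable
  moreover have "(\<lambda>x. (1 - a) * (indicator {0..1} x *\<^sub>R p (x, m)) + a * indicator {0..1} x) =
      (\<lambda>x. indicator {0..1} x *\<^sub>R (p (x, m) + a * (1 - p (x, m))))"
    by (auto simp: indicator_def algebra_simps)
  ultimately show "set_borel_measurable borel {0..1} (\<lambda>s. p (s, m) + a * (1 - p (s, m)))"
    unfolding set_borel_measurable_def by simp
qed

lemma prio_ok:
  assumes tK: "t \<in> Kset"
  shows "V (thr t) \<le> V (prio_alloc q (thr t) d)"
proof -
  define P where "P = thr t"
  define T where "T = total P d"
  have T: "T \<le> q" using tK unfolding T_def P_def total_thr Kset_def by simp
  have T0: "0 \<le> T" unfolding T_def P_def total_def using xm_nonneg[OF good_thr] by (simp add: sum_nonneg)
  have P01: "P \<theta> = 0 \<or> P \<theta> = 1" for \<theta> unfolding P_def thr_def by auto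
  have up: "prio_upper P d p = (if p < 0 then 1 else if p < 1 then T else 0)" for p
  proof -
    consider "p < 0" | "0 \<le> p" "p < 1" | "1 \<le> p" by linarith
    then show ?thesis
    proof cases
      case 1
      then have "(\<lambda>\<theta>. if P \<theta> > p then 1 else 0 :: real) = (\<lambda>_. 1)"
      proof (intro ext)
        fix \<theta> show "(if P \<theta> > p then 1 else 0 :: real) = 1" using P01[of \<theta>] 1 by auto
      qed
      then show ?thesis using 1 total_one unfolding prio_upper_def by simp
    next
      case 2
      then have "(\<lambda>\<theta>. if P \<theta> > p then 1 else 0 :: real) = P"
      proof (intro ext)
        fix \<theta> show "(if P \<theta> > p then 1 else 0 :: real) = P \<theta>" using P01[of \<theta>] 2 by auto
      qed
      then show ?thesis using 2 unfolding prio_upper_def T_def by simp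
    next
      case 3
      then have "(\<lambda>\<theta>. if P \<theta> > p then 1 else 0 :: real) = (\<lambda>_. 0)"
      proof (intro ext)
        fix \<theta> show "(if P \<theta> > p then 1 else 0 :: real) = 0" using P01[of \<theta>] 3 by auto
      qed
      then show ?thesis using 3 total_zero unfolding prio_upper_def by simp
    qed
  qed
  have set: "{p. prio_upper P d p \<le> q} = {0..}"
  proof (rule set_eqI)
    fix p show "p \<in> {p. prio_upper P d p \<le> q} \<longleftrightarrow> p \<in> {0..}"
      using T q by (cases "p < 0"; cases "p < 1") (simp_all add: up)
  qed
  have inf: "Inf {p. prio_upper P d p \<le> q} = 0" unfolding set by simp
  have tie: "prio_tie P d 0 = 1 - T"
  proof -
    have "(\<lambda>\<theta>. if P \<theta> = 0 then 1 else 0 :: real) = (\<lambda>\<theta>. 1 * 1 + (-1) * P \<theta>)" using P01 by (auto simp: fun_eq_iff)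
    then show ?thesis unfolding prio_tie_def T_def
      using total_lin[OF good_one good_thr[of t], of 1 "-1"] total_one by (simp add: P_def)
  qed
  define a where "a = (q - T) / (1 - T)"
  have a: "0 \<le> a" "a \<le> 1" unfolding a_def using T q by (auto simp: divide_simps)
  have alloc: "prio_alloc q P d = (\<lambda>\<theta>. P \<theta> + a * (1 - P \<theta>))"
  proof
    fix \<theta>
    have "\<not> total (\<lambda>_. 1) d \<le> q" using total_one q by simp
    then have "prio_alloc q P d \<theta> = (if P \<theta> > 0 then 1 else if P \<theta> = 0 then (q - prio_upper P d 0) / prio_tie P d 0 else 0)"
      unfolding prio_alloc_def Let_def inf by simp
    moreover have "(q - prio_upper P d 0) / prio_tie P d 0 = a" unfolding a_def tie up by simp
    ultimately show "prio_alloc q P d \<theta> = P \<theta> + a * (1 - P \<theta>)"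
      using P01[of \<theta>] by auto
  qed
  have gn: "good (\<lambda>\<theta>. P \<theta> + a * (1 - P \<theta>))" using good_affine[OF good_thr a] by (simp add: P_def)
  have tot: "total (\<lambda>\<theta>. P \<theta> + a * (1 - P \<theta>)) d = q"
  proof -
    have "(\<lambda>\<theta>. P \<theta> + a * (1 - P \<theta>)) = (\<lambda>\<theta>. a * 1 + (1 - a) * P \<theta>)" by (auto simp: algebra_simps)
    then have "total (\<lambda>\<theta>. P \<theta> + a * (1 - P \<theta>)) d = a + (1 - a) * T"
      using total_lin[OF good_one good_thr[of t], of a "1 - a"] total_one by (simp add: P_def T_def)
    also have "\<dots> = a * (1 - T) + T" by (simp add: algebra_simps)
    also have "a * (1 - T) = q - T" unfolding a_def using T q by simp
    finally show ?thesis by simp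
  qed
  have "V P \<le> V (\<lambda>\<theta>. P \<theta> + a * (1 - P \<theta>))"
  proof (rule V_mono[OF good_thr[of t, folded P_def] gn])
    fix s m
    have "0 \<le> a * (1 - P (s, m))" using a P01[of "(s, m)"] by auto
    then show "P (s, m) \<le> P (s, m) + a * (1 - P (s, m))" by simp
  qed (rule tot[THEN eq_refl])
  then show ?thesis using alloc by (simp add: P_def)
qed

definition sec :: "(real \<times> 'm) set \<Rightarrow> 'm \<Rightarrow> real set" where
  "sec A m = {s. (s, m) \<in> A}"

definition measA :: "(real \<times> 'm) set \<Rightarrow> bool" where
  "measA A \<longleftrightarrow> (\<forall>m. sec A m \<in> sets borel)"

lemma good_ind: "measA A \<Longrightarrow> good (indicator A)"
proof -
  assume a: "measA A"
  have "goodf (\<lambda>s. indicator A (s, m))" for m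
  proof -
    have "(\<lambda>s. indicator A (s, m) :: real) = indicator (sec A m)" by (auto simp: sec_def indicator_def)
    moreover have "(\<lambda>x. indicator {0..1} x * indicator A (x, m) :: real) = indicator ({0..1} \<inter> sec A m)"
      by (auto simp: indicator_def sec_def)
    moreover have "sec A m \<in> sets borel" using a unfolding measA_def by auto
    then have "indicator ({0..1} \<inter> sec A m) \<in> borel_measurable borel"
      by (intro borel_measurable_indicator) auto
    ultimately show ?thesis unfolding goodf_def set_borel_measurable_def by simp
  qed
  then show ?thesis unfolding good_def by auto
qed

lemma mass_total: "mass d A = total (indicator A) d"
  unfolding mass_def ..

lemma mass_nonneg': "measA A \<Longrightarrow> 0 \<le> mass d A"
  unfolding mass_def total_def using xm_nonneg[OF good_ind] by (simp add: sum_nonneg)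

lemma mass_union:
  assumes "measA A" "measA B" "A \<inter> B = {}"
  shows "mass d (A \<union> B) = mass d A + mass d B"
proof -
  have "indicator (A \<union> B) = (\<lambda>\<theta>. 1 * indicator A \<theta> + 1 * indicator B \<theta> :: real)"
    using assms(3) by (auto simp: indicator_def fun_eq_iff)
  then show ?thesis unfolding mass_def using total_lin[OF good_ind[OF assms(1)] good_ind[OF assms(2)], of 1 1] by simp
qed

lemma measA_Un: "measA A \<Longrightarrow> measA B \<Longrightarrow> measA (A \<union> B)"
proof -
  assume "measA A" "measA B"
  moreover have "sec (A \<union> B) m = sec A m \<union> sec B m" for m by (auto simp: sec_def)
  ultimately show ?thesis unfolding measA_def by auto
qed

definition fillR :: "(real \<times> 'm) set \<Rightarrow> real \<Rightarrow> (real \<times> 'm) set" where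
  "fillR R k = (if mass d R \<le> k then R else {\<theta>\<in>R. fst \<theta> > Inf {t. mass d {\<theta>\<in>R. fst \<theta> > t} \<le> k}})"

lemma fill_eq: "fill d A E k = A \<union> fillR {\<theta>. snd \<theta> \<in> E \<and> \<theta> \<notin> A} k"
  unfolding fill_def fillR_def Let_def by auto

lemma measA_thr: "measA R \<Longrightarrow> measA {\<theta>\<in>R. fst \<theta> > t}"
proof -
  assume "measA R"
  moreover have "sec {\<theta>\<in>R. fst \<theta> > t} m = sec R m \<inter> {t<..}" for m by (auto simp: sec_def)
  ultimately show ?thesis unfolding measA_def by auto
qed

lemma mass_thr_repr:
  "mass d {\<theta>\<in>R. fst \<theta> > t} = (\<Sum>m\<in>UNIV. LINT s:{0..1}|lborel. (if t < s then indicator (sec R m) s * d (s, m) else 0))"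
  unfolding mass_def total_def xm_def
  by (intro sum.cong refl set_lebesgue_integral_cong) (auto simp: indicator_def sec_def)

lemma fillR_props:
  assumes R: "measA R" and k: "0 \<le> k"
  shows "fillR R k \<subseteq> R \<and> measA (fillR R k) \<and> mass d (fillR R k) \<le> k"
    and "\<not> mass d R \<le> k \<Longrightarrow> \<exists>\<tau>. 0 \<le> \<tau> \<and> \<tau> \<le> 1 \<and> fillR R k = {\<theta>\<in>R. fst \<theta> > \<tau>} \<and> mass d (fillR R k) = k"
proof -
  define M where "M t = mass d {\<theta>\<in>R. fst \<theta> > t}" for t
  have Mc: "continuous_on UNIV M"
    unfolding M_def[abs_def] mass_thr_repr
  proof (intro continuous_on_sum)
    fix m
    have "set_integrable lborel {0..1} (\<lambda>s. indicator (sec R m) s * d (s, m))"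
    proof (rule int_good[OF _ d_int])
      have "(\<lambda>x. indicator {0..1} x *\<^sub>R indicator (sec R m) x :: real) = indicator ({0..1} \<inter> sec R m)"
        by (auto simp: indicator_def)
      then show "goodf (indicator (sec R m))" using R unfolding goodf_def set_borel_measurable_def measA_def
        by (auto simp: indicator_def)
    qed
    then show "continuous_on UNIV (\<lambda>t. LINT s:{0..1}|lborel. (if t < s then indicator (sec R m) s * d (s, m) else 0))"
      by (rule tail_cont)
  qed
  have Mneg: "M t = mass d R" if "t < 0" for t
  proof -
    have "{\<theta>\<in>R. fst \<theta> > t} \<inter> ({0..1} \<times> UNIV) = R \<inter> ({0..1} \<times> UNIV)" using that by auto
    have e: "\<And>x m. x \<in> {0..1} \<Longrightarrow> indicator {\<theta>\<in>R. fst \<theta> > t} (x, m) * d (x, m) = indicator R (x, m) * d (x, m)"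
      using that by (auto simp: indicator_def)
    show ?thesis unfolding M_def mass_def total_def xm_def
      by (intro sum.cong refl set_lebesgue_integral_cong) (simp_all add: e)
  qed
  have Mge1: "M t = 0" if "1 \<le> t" for t
  proof -
    have e: "\<And>x m. x \<in> {0..1} \<Longrightarrow> indicator {\<theta>\<in>R. fst \<theta> > t} (x, m) * d (x, m) = 0"
      using that by (auto simp: indicator_def)
    have "xm (indicator {\<theta>\<in>R. fst \<theta> > t}) d m = 0" for m
      unfolding xm_def by (subst set_lebesgue_integral_cong[where g="\<lambda>_. 0"]) (simp_all add: e)
    then show ?thesis unfolding M_def mass_def total_def by simp
  qed
  show "fillR R k \<subseteq> R \<and> measA (fillR R k) \<and> mass d (fillR R k) \<le> k"
  proof (cases "mass d R \<le> k")
    case True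
    then show ?thesis using R by (simp add: fillR_def)
  next
    case False
    have it: "0 \<le> Inf {t. M t \<le> k} \<and> Inf {t. M t \<le> k} \<le> 1 \<and> M (Inf {t. M t \<le> k}) = k"
      by (rule inf_thresh[OF Mc Mneg Mge1 k]) (use False in auto)
    then show ?thesis using False R measA_thr unfolding fillR_def M_def by auto
  qed
  assume F: "\<not> mass d R \<le> k"
  have it: "0 \<le> Inf {t. M t \<le> k} \<and> Inf {t. M t \<le> k} \<le> 1 \<and> M (Inf {t. M t \<le> k}) = k"
    by (rule inf_thresh[OF Mc Mneg Mge1 k]) (use F in auto)
  then show "\<exists>\<tau>. 0 \<le> \<tau> \<and> \<tau> \<le> 1 \<and> fillR R k = {\<theta>\<in>R. fst \<theta> > \<tau>} \<and> mass d (fillR R k) = k"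
    using F unfolding fillR_def M_def by auto
qed

lemma fill_props:
  assumes A: "measA A" and k: "0 \<le> k"
  shows "A \<subseteq> fill d A E k \<and> measA (fill d A E k) \<and> mass d (fill d A E k) \<le> mass d A + k"
proof -
  define R where "R = {\<theta>. snd \<theta> \<in> E \<and> \<theta> \<notin> A}"
  have "sec R m = (if m \<in> E then - sec A m else {})" for m by (auto simp: R_def sec_def)
  then have mR: "measA R" using A unfolding measA_def by auto
  note fp = fillR_props(1)[OF mR k]
  have disj: "A \<inter> fillR R k = {}" using fp unfolding R_def by auto
  have "mass d (A \<union> fillR R k) = mass d A + mass d (fillR R k)"
    by (rule mass_union[OF A _ disj]) (use fp in auto)
  then show ?thesis unfolding fill_eq R_def[symmetric] using fp measA_Un[OF A] by auto
qed

lemma mass_single: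
  assumes "X \<subseteq> {\<theta>. snd \<theta> = m}"
  shows "mass d X = xm (indicator X) d m"
proof -
  have z: "xm (indicator X) d m' = (if m' = m then xm (indicator X) d m else 0)" for m'
  proof (cases "m' = m")
    case False
    then have "\<And>s. indicator X (s, m') = (0::real)" using assms by (auto simp: indicator_def)
    then show ?thesis using False unfolding xm_def by simp
  qed simp
  have "mass d X = (\<Sum>m'\<in>UNIV. (if m' = m then xm (indicator X) d m else 0))"
    unfolding mass_def total_def by (rule sum.cong[OF refl z])
  then show ?thesis by simp
qed

definition Tset :: "'m \<Rightarrow> real \<Rightarrow> (real \<times> 'm) set" where
  "Tset m k = fillR {\<theta>. snd \<theta> = m} k"

lemma measA_group: "measA {\<theta>. snd \<theta> = m}"
proof -
  have "sec {\<theta>. snd \<theta> = m} m' = (if m' = m then UNIV else {})" for m' by (auto simp: sec_def)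
  then show ?thesis unfolding measA_def by auto
qed

lemma Tset_props:
  assumes k: "0 \<le> k" "k \<le> mass_m m"
  shows "Tset m k \<subseteq> {\<theta>. snd \<theta> = m}" "measA (Tset m k)" "xm (indicator (Tset m k)) d m = k"
    "\<exists>\<tau>\<le>1. \<forall>s\<in>{0..1}. indicator (Tset m k) (s, m) = (if \<tau> < s then 1 else 0 :: real)"
proof -
  note fp = fillR_props[OF measA_group k(1), of m]
  show "Tset m k \<subseteq> {\<theta>. snd \<theta> = m}" "measA (Tset m k)" using fp(1) unfolding Tset_def by auto
  have mG: "mass d {\<theta>. snd \<theta> = m} = mass_m m"
    unfolding mass_single[OF order_refl] xm_def mass_m_def by (simp add: indicator_def)
  have "xm (indicator (Tset m k)) d m = k \<and> (\<exists>\<tau>\<le>1. \<forall>s\<in>{0..1}. indicator (Tset m k) (s, m) = (if \<tau> < s then 1 else 0 :: real))"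
  proof (cases "mass d {\<theta>. snd \<theta> = m} \<le> k")
    case True
    then have T: "Tset m k = {\<theta>. snd \<theta> = m}" unfolding Tset_def fillR_def by simp
    have "xm (indicator (Tset m k)) d m = k"
      using True k mG mass_single[OF order_refl, of m] T by simp
    moreover have "\<forall>s\<in>{0..1}. indicator (Tset m k) (s, m) = (if -1 < s then 1 else 0 :: real)"
      using T by (auto simp: indicator_def)
    ultimately show ?thesis by (intro conjI exI[of _ "-1"]) auto
  next
    case False
    obtain \<tau> where tau: "0 \<le> \<tau>" "\<tau> \<le> 1" "Tset m k = {\<theta>\<in>{\<theta>. snd \<theta> = m}. fst \<theta> > \<tau>}"
       "mass d (Tset m k) = k"
      using fp(2)[OF False] unfolding Tset_def by blast
    have "xm (indicator (Tset m k)) d m = k"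
    proof -
      have "Tset m k \<subseteq> {\<theta>. snd \<theta> = m}" using tau(3) by auto
      from mass_single[OF this] tau(4) show ?thesis by simp
    qed
    moreover have "\<forall>s\<in>{0..1}. indicator (Tset m k) (s, m) = (if \<tau> < s then 1 else 0 :: real)"
      using tau(3) by (auto simp: indicator_def)
    ultimately show ?thesis using tau(2) by blast
  qed
  then show "xm (indicator (Tset m k)) d m = k"
    "\<exists>\<tau>\<le>1. \<forall>s\<in>{0..1}. indicator (Tset m k) (s, m) = (if \<tau> < s then 1 else 0 :: real)" by auto
qed

lemma quota_ok:
  assumes tK: "t \<in> Kset"
  shows "\<exists>D. quota_policy q (\<lambda>m. Fm m (t $ m)) D \<and> V (thr t) \<le> V (quota_alloc q (\<lambda>m. Fm m (t $ m)) D d)"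
proof -
  define Q where "Q m = Fm m (t $ m)" for m
  have Q0: "0 \<le> Q m" "Q m \<le> mass_m m" for m unfolding Q_def using Fm_bounds by auto
  have sumQ: "(\<Sum>m\<in>UNIV. Q m) \<le> q" using tK unfolding Kset_def Q_def by simp
  obtain e :: "'m \<Rightarrow> nat" where e: "bij_betw e UNIV {0..<CARD('m)}"
    using ex_bij_betw_finite_nat[of "UNIV :: 'm set"] by auto
  have e_inj: "e a = e b \<Longrightarrow> a = b" for a b using e by (auto simp: bij_betw_def inj_on_def)
  have e_lt: "e a < CARD('m)" for a using e by (auto simp: bij_betw_def)
  have e_surj: "\<exists>a. e a = n" if "n < CARD('m)" for n
  proof -
    have "n \<in> e ` UNIV" using e that by (simp add: bij_betw_def)
    then show ?thesis by auto
  qed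
  define D :: "'m option \<Rightarrow> nat" where "D r = (case r of None \<Rightarrow> CARD('m) + 1 | Some m \<Rightarrow> e m + 1)" for r
  have D_inj: "inj D"
  proof (rule injI)
    fix a b assume "D a = D b"
    then show "a = b"
    proof (cases a; cases b)
      fix x y assume "a = Some x" "b = Some y" "D a = D b"
      then show "a = b" unfolding D_def using e_inj by auto
    next
      fix x assume "a = Some x" "b = None" "D a = D b"
      then show "a = b" unfolding D_def using e_lt[of x] by auto
    next
      fix y assume "a = None" "b = Some y" "D a = D b"
      then show "a = b" unfolding D_def using e_lt[of y] by auto
    qed simp
  qed
  have D_bij: "bij_betw D UNIV {1..CARD('m) + 1}"
  proof (unfold bij_betw_def, intro conjI D_inj)
    show "range D = {1..CARD('m) + 1}"
    proof (intro set_eqI iffI)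
      fix i assume "i \<in> range D"
      then show "i \<in> {1..CARD('m) + 1}" unfolding D_def using e_lt
        by (auto split: option.splits) (metis Suc_leI less_imp_le_nat)
    next
      fix i assume i: "i \<in> {1..CARD('m) + 1}"
      show "i \<in> range D"
      proof (cases "i = CARD('m) + 1")
        case True then show ?thesis unfolding D_def by (metis option.simps(4) rangeI)
      next
        case False
        then have "i - 1 < CARD('m)" using i by auto
        then obtain a where "e a = i - 1" using e_surj by blast
        then have "D (Some a) = i" unfolding D_def using i by auto
        then show ?thesis by (metis rangeI)
      qed
    qed
  qed
  have invD: "inv_into UNIV D (D r) = r" for r using D_inj by (simp add: inv_into_f_f)
  have pol: "quota_policy q Q D" unfolding quota_policy_def using Q0 sumQ D_bij by auto
  define Fn where "Fn = (\<lambda>i A. fill d A (reserve_groups (inv_into UNIV D i)) (reserve_amt q Q (inv_into UNIV D i)))"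
  define AG where "AG = {\<theta>. \<theta> \<in> Tset (snd \<theta>) (Q (snd \<theta>))}"
  have TS: "\<And>m. Tset m (Q m) \<subseteq> {\<theta>. snd \<theta> = m}" using Tset_props(1)[OF Q0] by blast
  have fold_n: "n \<le> CARD('m) \<Longrightarrow> fold Fn [1..<n+1] {} = {\<theta>. e (snd \<theta>) < n \<and> \<theta> \<in> Tset (snd \<theta>) (Q (snd \<theta>))}" for n
  proof (induction n)
    case 0 then show ?case by simp
  next
    case (Suc n)
    then have nlt: "n < CARD('m)" by simp
    obtain mn where mn: "e mn = n" using e_surj[OF nlt] by blast
    have Dn: "inv_into UNIV D (n + 1) = Some mn"
      using invD[of "Some mn"] mn unfolding D_def by simp
    define An where "An = {\<theta>. e (snd \<theta>) < n \<and> \<theta> \<in> Tset (snd \<theta>) (Q (snd \<theta>))}"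
    have IH: "fold Fn [1..<n+1] {} = An" using Suc nlt unfolding An_def by simp
    have ups: "[1..<Suc n + 1] = [1..<n+1] @ [n+1]" by simp
    have "fold Fn [1..<Suc n + 1] {} = Fn (n+1) An" unfolding ups using IH by simp
    also have "\<dots> = fill d An {mn} (Q mn)"
      unfolding Fn_def Dn reserve_groups_def reserve_amt_def by simp
    also have "\<dots> = An \<union> Tset mn (Q mn)"
    proof -
      have "{\<theta>. snd \<theta> \<in> {mn} \<and> \<theta> \<notin> An} = {\<theta>. snd \<theta> = mn}" unfolding An_def using mn by auto
      then show ?thesis unfolding fill_eq Tset_def by simp
    qed
    also have "\<dots> = {\<theta>. e (snd \<theta>) < Suc n \<and> \<theta> \<in> Tset (snd \<theta>) (Q (snd \<theta>))}"
    proof (intro set_eqI iffI)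
      fix \<theta> assume "\<theta> \<in> An \<union> Tset mn (Q mn)"
      then show "\<theta> \<in> {\<theta>. e (snd \<theta>) < Suc n \<and> \<theta> \<in> Tset (snd \<theta>) (Q (snd \<theta>))}"
      proof
        assume "\<theta> \<in> An" then show ?thesis unfolding An_def by auto
      next
        assume a: "\<theta> \<in> Tset mn (Q mn)"
        then have "snd \<theta> = mn" using TS by blast
        then show ?thesis using a mn by auto
      qed
    next
      fix \<theta> assume a: "\<theta> \<in> {\<theta>. e (snd \<theta>) < Suc n \<and> \<theta> \<in> Tset (snd \<theta>) (Q (snd \<theta>))}"
      show "\<theta> \<in> An \<union> Tset mn (Q mn)"
      proof (cases "e (snd \<theta>) = n")
        case True
        then have "snd \<theta> = mn" using mn e_inj by metis
        then show ?thesis using a by auto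
      next
        case False then show ?thesis using a unfolding An_def by auto
      qed
    qed
    finally show ?case .
  qed
  have AG_eq: "fold Fn [1..<CARD('m)+1] {} = AG"
    using fold_n[of "CARD('m)"] e_lt unfolding AG_def by simp
  have secAG: "sec AG m = sec (Tset m (Q m)) m" for m unfolding AG_def sec_def by auto
  have mAG: "measA AG"
    unfolding measA_def secAG using Tset_props(2)[OF Q0] unfolding measA_def by blast
  have indAG: "indicator AG (s, m) = (indicator (Tset m (Q m)) (s, m) :: real)" for s m
    unfolding AG_def by (simp add: indicator_def)
  have xmAG: "xm (indicator AG) d m = Q m" for m
    unfolding xm_def indAG using Tset_props(3)[OF Q0, of m] unfolding xm_def .
  have massAG: "mass d AG = (\<Sum>m\<in>UNIV. Q m)" unfolding mass_def total_def xmAG ..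
  define A1 where "A1 = fill d AG UNIV (q - (\<Sum>m\<in>UNIV. Q m))"
  have DN: "inv_into UNIV D (CARD('m) + 1) = None" using invD[of None] unfolding D_def by simp
  have ups2: "[1..<CARD('m) + 2] = [1..<CARD('m)+1] @ [CARD('m)+1]" by simp
  have "fold Fn [1..<CARD('m) + 2] {} = Fn (CARD('m)+1) (fold Fn [1..<CARD('m)+1] {})"
    unfolding ups2 by (simp only: fold_append comp_def fold_simps)
  also have "\<dots> = Fn (CARD('m)+1) AG" unfolding AG_eq ..
  also have "\<dots> = A1" unfolding Fn_def DN A1_def reserve_groups_def reserve_amt_def by simp
  finally have A1_eq: "fold Fn [1..<CARD('m) + 2] {} = A1" .
  note f1 = fill_props[OF mAG, of "q - (\<Sum>m\<in>UNIV. Q m)" UNIV]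
  have A1p: "AG \<subseteq> A1" "measA A1" "mass d A1 \<le> q"
    using f1 sumQ massAG unfolding A1_def by auto
  define A2 where "A2 = fill d A1 UNIV (q - mass d A1)"
  note f2 = fill_props[OF A1p(2), of "q - mass d A1" UNIV]
  have A2p: "A1 \<subseteq> A2" "measA A2" "mass d A2 \<le> q"
    using f2 A1p unfolding A2_def by auto
  have "quota_alloc q Q D d = indicator (fill d (fold Fn [1..<CARD('m)+2] {}) UNIV (q - mass d (fold Fn [1..<CARD('m)+2] {})))"
    unfolding quota_alloc_def Let_def Fn_def ..
  then have qa: "quota_alloc q Q D d = indicator A2"
    unfolding A1_eq A2_def .
  have "V (thr t) \<le> V (indicator AG)"
  proof -
    have "(LINT s:{0..1}|lborel. thr t (s, m) * h s * d (s, m)) \<le> (LINT s:{0..1}|lborel. indicator AG (s, m) * h s * d (s, m))" for m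
    proof -
      obtain \<tau> where tau: "\<tau> \<le> 1" "\<forall>s\<in>{0..1}. indicator (Tset m (Q m)) (s, m) = (if \<tau> < s then 1 else 0 :: real)"
        using Tset_props(4)[OF Q0, of m] by blast
      show ?thesis
      proof (rule rearr[OF good_thr good_ind[OF mAG], of "max 0 \<tau>"])
        show "max 0 \<tau> \<in> {0..1}" using tau by auto
        show "0 \<le> (indicator AG (s, m) - thr t (s, m)) * (h s - h (max 0 \<tau>))" if "s \<in> {0..1}" for s
          using thr_sign[OF good_thr tau(1) that, of t m] tau(2) that unfolding indAG by simp
        show "xm (thr t) d m = xm (indicator AG) d m" unfolding xmAG xm_thr Q_def ..
      qed
    qed
    moreover have "xm (thr t) d m = xm (indicator AG) d m" for m unfolding xmAG xm_thr Q_def ..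
    ultimately show ?thesis unfolding V_def sbar_def by (auto intro!: add_mono sum_mono)
  qed
  also have "V (indicator AG) \<le> V (indicator A2)"
  proof (rule V_mono[OF good_ind[OF mAG] good_ind[OF A2p(2)]])
    show "indicator AG (s, m) \<le> (indicator A2 (s, m) :: real)" for s m
      using A1p(1) A2p(1) by (auto simp: indicator_def)
    show "total (indicator A2) d \<le> q" using A2p(3) unfolding mass_def .
  qed
  finally show ?thesis using pol qa unfolding Q_def by auto
qed

end


lemma Xi_dirac:
  fixes f :: "'w \<Rightarrow> real \<times> 'm::finite \<Rightarrow> real"
  shows "Xi g u h f \<phi> (return (count_space UNIV) \<omega>0) = xi g u h (\<phi> \<omega>0) (f \<omega>0)"
  unfolding Xi_def by (rule integral_return) auto

theorem proposition3:
  fixes f :: "'w \<Rightarrow> real \<times> 'm::finite \<Rightarrow> real"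
    and h :: "real \<Rightarrow> real" and g :: "real \<Rightarrow> real" and u :: "'m \<Rightarrow> real \<Rightarrow> real"
    and q :: real and \<Lambda> :: "'w measure" and \<omega>0 :: 'w
  assumes q: "0 < q" "q < 1"
    and dens_nonneg: "\<And>w s m. f w (s, m) \<ge> 0"
    and dens_int: "\<And>w m. set_integrable lborel {0..1} (\<lambda>s. f w (s, m))"
    and dens_prob: "\<And>w. (\<Sum>m\<in>UNIV. LINT s:{0..1}|lborel. f w (s, m)) = 1"
    and h_cont: "continuous_on {0..1} h" and h_mono: "strict_mono_on {0..1} h"
    and h_nonneg: "\<And>s. s \<in> {0..1} \<Longrightarrow> h s \<ge> 0"
    and g_cont: "continuous_on UNIV g" and g_mono: "strict_mono g"
    and u_conc: "\<And>m. concave_on {0..1} (u m)"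
    and u_diff: "\<And>m x. x \<in> {0..1} \<Longrightarrow> u m differentiable (at x within {0..1})"
    and u_cond: "\<And>m. h 0 + deriv (u m) q \<ge> 0"
    and dirac: "\<Lambda> = return (count_space UNIV) \<omega>0"
  shows "(\<exists>P. (\<forall>m. (\<lambda>s. P (s, m)) \<in> borel_measurable borel) \<and>
            (\<forall>\<phi>. mechanism q f \<phi> \<longrightarrow> Xi g u h f \<phi> \<Lambda> \<le> Xi g u h f (prio_mech q P f) \<Lambda>))
       \<and> (\<exists>Q D. quota_policy q Q D \<and>
            (\<forall>\<phi>. mechanism q f \<phi> \<longrightarrow> Xi g u h f \<phi> \<Lambda> \<le> Xi g u h f (quota_mech q Q D f) \<Lambda>))"
proof -
  interpret S: setting "f \<omega>0" h u q
    by unfold_locales (use q dens_nonneg dens_int dens_prob h_cont h_mono h_nonneg u_conc u_diff u_cond in auto)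
  have gm: "mono g" using g_mono by (rule strict_mono_mono)
  have Xi_eq: "Xi g u h f \<phi> \<Lambda> = g (S.V (\<phi> \<omega>0))" for \<phi>
    unfolding dirac Xi_dirac xi_def S.V_def ..
  obtain t where tK: "t \<in> S.Kset" and topt: "\<And>t'. t' \<in> S.Kset \<Longrightarrow> S.Sf t' \<le> S.Sf t"
    using S.exists_opt by blast
  have bound: "S.V (\<phi> \<omega>0) \<le> S.V (S.thr t)" if "mechanism q f \<phi>" for \<phi>
  proof -
    have al: "allocation q (f \<omega>0) (\<phi> \<omega>0)" using that unfolding mechanism_def by auto
    have a1: "\<And>\<theta>. \<phi> \<omega>0 \<theta> \<in> {0, 1}" and a2: "\<And>m. set_borel_measurable borel {0..1} (\<lambda>s. \<phi> \<omega>0 (s, m))"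
      using al unfolding allocation_def by auto
    have "S.good (\<phi> \<omega>0)" unfolding S.good_def goodf_def
    proof (intro allI conjI a2)
      fix m s show "0 \<le> \<phi> \<omega>0 (s, m)" "\<phi> \<omega>0 (s, m) \<le> 1" using a1[of "(s, m)"] by auto
    qed
    moreover have "total (\<phi> \<omega>0) (f \<omega>0) \<le> q" using al unfolding allocation_def by auto
    ultimately obtain t' where "t' \<in> S.Kset" "S.V (\<phi> \<omega>0) \<le> S.Sf t'" using S.dominated by blast
    then show ?thesis using topt S.V_thr by fastforce
  qed
  have part1: "\<exists>P. (\<forall>m. (\<lambda>s. P (s, m)) \<in> borel_measurable borel) \<and>
            (\<forall>\<phi>. mechanism q f \<phi> \<longrightarrow> Xi g u h f \<phi> \<Lambda> \<le> Xi g u h f (prio_mech q P f) \<Lambda>)"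
  proof (intro exI conjI allI impI)
    fix m
    have "(\<lambda>s. S.thr t (s, m)) = (indicator {t $ m<..} :: real \<Rightarrow> real)"
      by (auto simp: S.thr_def indicator_def)
    then show "(\<lambda>s. S.thr t (s, m)) \<in> borel_measurable borel" by simp
  next
    fix \<phi> assume "mechanism q f \<phi>"
    then have "S.V (\<phi> \<omega>0) \<le> S.V (prio_alloc q (S.thr t) (f \<omega>0))"
      using bound S.prio_ok[OF tK] by (meson order_trans)
    then show "Xi g u h f \<phi> \<Lambda> \<le> Xi g u h f (prio_mech q (S.thr t) f) \<Lambda>"
      unfolding Xi_eq prio_mech_def using gm by (auto intro: monoD)
  qed
  obtain D where D: "quota_policy q (\<lambda>m. S.Fm m (t $ m)) D"
    "S.V (S.thr t) \<le> S.V (quota_alloc q (\<lambda>m. S.Fm m (t $ m)) D (f \<omega>0))"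
    using S.quota_ok[OF tK] by blast
  have part2: "\<exists>Q D. quota_policy q Q D \<and>
            (\<forall>\<phi>. mechanism q f \<phi> \<longrightarrow> Xi g u h f \<phi> \<Lambda> \<le> Xi g u h f (quota_mech q Q D f) \<Lambda>)"
  proof (intro exI conjI allI impI)
    show "quota_policy q (\<lambda>m. S.Fm m (t $ m)) D" by (rule D(1))
  next
    fix \<phi> assume "mechanism q f \<phi>"
    then have "S.V (\<phi> \<omega>0) \<le> S.V (quota_alloc q (\<lambda>m. S.Fm m (t $ m)) D (f \<omega>0))"
      using bound D(2) by (meson order_trans)
    then show "Xi g u h f \<phi> \<Lambda> \<le> Xi g u h f (quota_mech q (\<lambda>m. S.Fm m (t $ m)) D f) \<Lambda>"
      unfolding Xi_eq quota_mech_def using gm by (auto intro: monoD)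
  qed
  show ?thesis using part1 part2 by blast
qed

end
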